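(* Regard the partially spherical subalgebra $e'H_pe'$ as a subring of $\mathscr K=\mathbb{C}(U_1,\dots,U_n)\star(T\rtimes S_n)$ via its action on $\mathbb{C}[U_1,\dots,U_n]$ described below. Then $e'H_pe'$ is a Galois $\mathbb{C}[U_1,\dots,U_n]$-ring in $\mathscr K$, i.e. it contains $\mathbb{C}[U_1,\dots,U_n]$ and $e'H_pe'\cdot\mathbb{C}(U_1,\dots,U_n)=\mathscr K=\mathbb{C}(U_1,\dots,U_n)\cdot e'H_pe'$.
   Context: Setting: $\ell,p,n$ positive integers, $p\mid\ell$, $\zeta=e^{2\pi i/\ell}$. $G(\ell,p,n)$ is the group of $n\times n$ monomial matrices with $\ell$-th root of unity entries whose product is an $(\ell/p)$-th root of unity. $H_p$ is the rational Cherednik algebra of $G(\ell,p,n)$ (quotient of $T(\mathfrak h\oplus\mathfrak h^* )\rtimes\mathbb{C}G(\ell,p,n)$, $\mathfrak h=\mathbb{C}^n$, by $[x,x']=0,[y,y']=0,[x,y]=\hbar\langle y,x\rangle-\sum_s c_s\langle\alpha_s,x\rangle\langle y,\alpha_s^\vee\rangle s$) with $\hbar\in\mathbb{C}^\times$, parameter $c$ on the reflections $t_i^kt_j^{-k}(i,j)$ and $c_m$ on $t_i^m$ (with $t_i=\mathrm{diag}(1,..,\zeta,..,1)$), where $c_m=0$ unless $p\mid m$. Put $h_r=\sum_{m=1}^{\ell-1}c_m\zeta^{rm}$ and $s_m=h_m+m\hbar$ for $m\in\mathbb{Z}$; then $s_{m+\ell/p}=s_m+\ell\hbar/p$. Let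 $A\subset G(\ell,p,n)$ be the subgroup of diagonal matrices and $e'=\frac1{|A|}\sum_{g\in A}g$; the partially spherical subalgebra is $e'H_pe'$. Skew ring: let $T\subset\mathbb{Z}^n$ be the lattice generated by $\ell e_1,\dots,\ell e_n$ and $\frac{\ell}{p}(e_1+\dots+e_n)$, acting on $\mathbb{C}(U_1,\dots,U_n)$ by $\mu_i(U_j)=U_j+\hbar\delta_{ij}$ ($\mu_i$ corresponding to $e_i$), and $S_n$ acting by permuting the $U_j$. $\mathscr K=\mathbb{C}(U)\star(T\rtimes S_n)$ is the free left $\mathbb{C}(U)$-module on $T\rtimes S_n$ with $(a\mu)(b\nu)=a\,\mu(b)\,\mu\nu$; it acts on $\mathbb{C}(U)$ by evaluation $(\sum a_\mu\mu)(f)=\sum a_\mu\mu(f)$. Embedding: $H_p$ has a faithful polynomial representation in which $e'H_pe'$ preserves a subspace identified with $\mathbb{C}[U_1,\dots,U_n]$; each element of $e'H_pe'$ acts there by the evaluation action of a unique element of $\mathscr K$, and $e'H_pe'$ is generated by elements acting by: multiplication by $U_i$; for $1\le i\le n-1$, $f\mapsto f^{w_i}+c\ell\frac{f^{w_i}-f}{U_{i+1}-U_i}$ ($w_i$ swapping $U_i,U_{i+1}$); $f\mapsto\prod_{m=0}^{\ell-1}(U_1+\ell\hbar-s_m)f(U_2,\dots,U_n,U_1+\ell\hbar)$; $f\mapsto f(U_n-\ell\hbar,U_1,\dots,U_{n-1})$; $f\mapsto\prod_{i=1}^n\prod_{m=0}^{\ell/p-1}(U_i+\ell\hbar/p-s_m)f(U_1+\ell\hbar/p,\dots,U_n+\ell\hbar/p)$;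 $f\mapsto f(U_1-\ell\hbar/p,\dots,U_n-\ell\hbar/p)$; and for $1\le i\le n-1$, $1\le j\le p-1$: $f\mapsto\prod_{r=1}^i\prod_{m=0}^{j\ell/p-1}(U_r+j\ell\hbar/p-s_m)\,f(U_{i+1}+j\ell\hbar/p-\ell\hbar,\dots,U_n+j\ell\hbar/p-\ell\hbar,U_1+j\ell\hbar/p,\dots,U_i+j\ell\hbar/p)$. A $\Gamma$-subring $\mathscr U\subseteq\mathscr K$ (with $\Gamma=\mathbb{C}[U]$, $K=\mathbb{C}(U)$) is a Galois $\Gamma$-ring if $\mathscr UK=\mathscr K=K\mathscr U$. *)

theory Defs
  imports Complex_Main "HOL-Library.Poly_Mapping" "HOL-Computational_Algebra.Fraction_Field"
    "HOL-Combinatorics.Permutations"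
begin

text \<open>Variables are indexed from 0: U_0,...,U_(n-1) correspond to the paper's U_1,...,U_n.
  A polynomial is a finitely supported map from monomials (exponent vectors) to coefficients.\<close>

type_synonym mpoly = "(nat \<Rightarrow>\<^sub>0 nat) \<Rightarrow>\<^sub>0 complex"
type_synonym rfun = "mpoly fract"

definition mconst :: "complex \<Rightarrow> mpoly" where
  "mconst c = Poly_Mapping.single 0 c"

definition mvar :: "nat \<Rightarrow> mpoly" where
  "mvar j = Poly_Mapping.single (Poly_Mapping.single j 1) 1"

definition msubst :: "(nat \<Rightarrow> mpoly) \<Rightarrow> mpoly \<Rightarrow> mpoly" where
  "msubst \<sigma> p = (\<Sum>m\<in>Poly_Mapping.keys p. mconst (Poly_Mapping.lookup p m) *
     (\<Prod>j\<in>Poly_Mapping.keys (m::nat \<Rightarrow>\<^sub>0 nat). \<sigma> j ^ Poly_Mapping.lookup m j))"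

text \<open>Extension of a ring endomorphism of the polynomial ring to the fraction field
  (well defined for injective ring homomorphisms, which is the case for all uses below).\<close>
definition rf_map :: "(mpoly \<Rightarrow> mpoly) \<Rightarrow> rfun \<Rightarrow> rfun" where
  "rf_map \<phi> x = (SOME y. \<exists>p q. q \<noteq> 0 \<and> x = Fract p q \<and> y = Fract (\<phi> p) (\<phi> q))"

definition emb :: "mpoly \<Rightarrow> rfun" where
  "emb p = Fract p 1"

definition Gam :: "nat \<Rightarrow> mpoly set" where
  "Gam n = {p. \<forall>m\<in>Poly_Mapping.keys p. \<forall>j\<in>Poly_Mapping.keys m. j < n}"

definition Kfield :: "nat \<Rightarrow> rfun set" where
  "Kfield n = {Fract p q | p q. p \<in> Gam n \<and> q \<in> Gam n \<and> q \<noteq> 0}"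

text \<open>An element (t,w): t in Z^n (zero outside the indices 0..n-1), w a permutation of {0..n-1}.
  It acts on C(U) as the automorphism mu^t o w, where w(U_j) = U_(w j) and
  mu_i(U_j) = U_j + hbar delta_ij; i.e. by the substitution U_j := U_(w j) + hbar * t(w j).\<close>

type_synonym grp = "(nat \<Rightarrow> int) \<times> (nat \<Rightarrow> nat)"

definition Tlat :: "nat \<Rightarrow> nat \<Rightarrow> nat \<Rightarrow> (nat \<Rightarrow> int) set" where
  "Tlat l p n = {t. (\<forall>j\<ge>n. t j = 0) \<and>
      (\<exists>(a::nat \<Rightarrow> int) (b::int). \<forall>j<n. t j = a j * int l + b * int (l div p))}"

definition Grp :: "nat \<Rightarrow> nat \<Rightarrow> nat \<Rightarrow> grp set" where
  "Grp l p n = {(t, w). t \<in> Tlat l p n \<and> w permutes {..<n}}"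

definition gid :: grp where
  "gid = ((\<lambda>_. 0), id)"

definition gmul :: "grp \<Rightarrow> grp \<Rightarrow> grp" where
  "gmul g g' = (case g of (t, w) \<Rightarrow> case g' of (t', w') \<Rightarrow>
      ((\<lambda>k. t k + t' (inv w k)), w \<circ> w'))"

definition gact :: "complex \<Rightarrow> grp \<Rightarrow> rfun \<Rightarrow> rfun" where
  "gact hbar g = (case g of (t, w) \<Rightarrow>
      rf_map (msubst (\<lambda>j. mvar (w j) + mconst (hbar * of_int (t (w j))))))"

text \<open>Elements are finitely supported maps from the group to K; F represents sum_g F(g) g.\<close>

type_synonym skew = "grp \<Rightarrow> rfun"

definition skSupp :: "skew \<Rightarrow> grp set" where
  "skSupp F = {g. F g \<noteq> 0}"

definition Skew :: "nat \<Rightarrow> nat \<Rightarrow> nat \<Rightarrow> skew set" where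
  "Skew l p n = {F. finite (skSupp F) \<and> (\<forall>g\<in>skSupp F. g \<in> Grp l p n \<and> F g \<in> Kfield n)}"

definition sk0 :: skew where
  "sk0 = (\<lambda>_. 0)"

definition skadd :: "skew \<Rightarrow> skew \<Rightarrow> skew" where
  "skadd F H = (\<lambda>g. F g + H g)"

text \<open>(a mu)(b nu) = a mu(b) mu nu, extended bilinearly.\<close>
definition skmul :: "complex \<Rightarrow> skew \<Rightarrow> skew \<Rightarrow> skew" where
  "skmul hbar F H = (\<lambda>g. \<Sum>(x, y)\<in>{(x, y). x \<in> skSupp F \<and> y \<in> skSupp H \<and> gmul x y = g}.
      F x * gact hbar x (H y))"

definition skterm :: "rfun \<Rightarrow> grp \<Rightarrow> skew" where
  "skterm a g = (\<lambda>x. if x = g then a else 0)"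

definition skscal :: "rfun \<Rightarrow> skew" where
  "skscal a = skterm a gid"

definition zeta :: "nat \<Rightarrow> complex" where
  "zeta l = exp (2 * of_real pi * \<i> / of_nat l)"

definition hpar :: "nat \<Rightarrow> (nat \<Rightarrow> complex) \<Rightarrow> nat \<Rightarrow> complex" where
  "hpar l cm r = (\<Sum>m = 1..l - 1. cm m * zeta l ^ (r * m))"

definition spar :: "nat \<Rightarrow> (nat \<Rightarrow> complex) \<Rightarrow> complex \<Rightarrow> nat \<Rightarrow> complex" where
  "spar l cm hbar m = hpar l cm m + of_nat m * hbar"

text \<open>Each generator is the element of the skew ring whose evaluation action on C[U] is
  the operator listed in the paper (translated to 0-based indices).\<close>

definition swapw :: "nat \<Rightarrow> nat \<Rightarrow> nat" where
  "swapw i = (\<lambda>k. if k = i then Suc i else if k = Suc i then i else k)"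

definition cycw :: "nat \<Rightarrow> nat \<Rightarrow> nat \<Rightarrow> nat" where
  "cycw n i = (\<lambda>k. if k < n then (k + i) mod n else k)"

definition gens :: "nat \<Rightarrow> nat \<Rightarrow> nat \<Rightarrow> complex \<Rightarrow> complex \<Rightarrow> (nat \<Rightarrow> complex) \<Rightarrow> skew set" where
  "gens l p n hbar c cm =
     \<comment> \<open>multiplication by U_i\<close>
     {skscal (emb (mvar i)) | i. i < n}
   \<union> \<comment> \<open>f \<mapsto> f^{w_i} + c l (f^{w_i} - f)/(U_{i+1} - U_i)\<close>
     {skadd (skterm (1 + emb (mconst (c * of_nat l)) / emb (mvar (Suc i) - mvar i)) ((\<lambda>_. 0), swapw i))
            (skscal (- (emb (mconst (c * of_nat l)) / emb (mvar (Suc i) - mvar i)))) | i. Suc i < n}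
   \<union> \<comment> \<open>f \<mapsto> prod_{m<l} (U_1 + l hbar - s_m) f(U_2,...,U_n,U_1 + l hbar)\<close>
     {skterm (emb (\<Prod>m<l. mvar 0 + mconst (of_nat l * hbar - spar l cm hbar m)))
             ((\<lambda>k. if k = 0 then int l else 0), cycw n 1)}
   \<union> \<comment> \<open>f \<mapsto> f(U_n - l hbar, U_1, ..., U_{n-1})\<close>
     {skterm 1 ((\<lambda>k. if k = n - 1 then - int l else 0), cycw n (n - 1))}
   \<union> \<comment> \<open>f \<mapsto> prod_i prod_{m<l/p} (U_i + l hbar/p - s_m) f(U + l hbar/p)\<close>
     {skterm (emb (\<Prod>i<n. \<Prod>m<l div p. mvar i + mconst (of_nat (l div p) * hbar - spar l cm hbar m)))
             ((\<lambda>k. if k < n then int (l div p) else 0), id)}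
   \<union> \<comment> \<open>f \<mapsto> f(U - l hbar/p)\<close>
     {skterm 1 ((\<lambda>k. if k < n then - int (l div p) else 0), id)}
   \<union> \<comment> \<open>1 \<le> i \<le> n-1, 1 \<le> j \<le> p-1\<close>
     {skterm (emb (\<Prod>r<i. \<Prod>m<j * (l div p). mvar r + mconst (of_nat (j * (l div p)) * hbar - spar l cm hbar m)))
             ((\<lambda>k. if k < n then (if k < i then int (j * (l div p)) else int (j * (l div p)) - int l) else 0),
              cycw n i)
       | i j. 1 \<le> i \<and> i \<le> n - 1 \<and> 1 \<le> j \<and> j \<le> p - 1}"

inductive_set subalg :: "complex \<Rightarrow> skew set \<Rightarrow> skew set" for hbar S where
  gen: "x \<in> S \<Longrightarrow> x \<in> subalg hbar S"
| const: "skscal (emb (mconst a)) \<in> subalg hbar S"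
| add: "x \<in> subalg hbar S \<Longrightarrow> y \<in> subalg hbar S \<Longrightarrow> skadd x y \<in> subalg hbar S"
| mul: "x \<in> subalg hbar S \<Longrightarrow> y \<in> subalg hbar S \<Longrightarrow> skmul hbar x y \<in> subalg hbar S"

definition sphAlg :: "nat \<Rightarrow> nat \<Rightarrow> nat \<Rightarrow> complex \<Rightarrow> complex \<Rightarrow> (nat \<Rightarrow> complex) \<Rightarrow> skew set" where
  "sphAlg l p n hbar c cm = subalg hbar (gens l p n hbar c cm)"

inductive_set rspan :: "complex \<Rightarrow> skew set \<Rightarrow> rfun set \<Rightarrow> skew set" for hbar U K where
  zero: "sk0 \<in> rspan hbar U K"
| trm: "u \<in> U \<Longrightarrow> a \<in> K \<Longrightarrow> skmul hbar u (skscal a) \<in> rspan hbar U K"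
| add: "x \<in> rspan hbar U K \<Longrightarrow> y \<in> rspan hbar U K \<Longrightarrow> skadd x y \<in> rspan hbar U K"

inductive_set lspan :: "complex \<Rightarrow> rfun set \<Rightarrow> skew set \<Rightarrow> skew set" for hbar K U where
  zero: "sk0 \<in> lspan hbar K U"
| trm: "u \<in> U \<Longrightarrow> a \<in> K \<Longrightarrow> skmul hbar (skscal a) u \<in> lspan hbar K U"
| add: "x \<in> lspan hbar K U \<Longrightarrow> y \<in> lspan hbar K U \<Longrightarrow> skadd x y \<in> lspan hbar K U"

definition galois_ring :: "nat \<Rightarrow> nat \<Rightarrow> nat \<Rightarrow> complex \<Rightarrow> skew set \<Rightarrow> bool" where
  "galois_ring l p n hbar U \<longleftrightarrow>
     U \<subseteq> Skew l p n \<and>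
     skscal ` emb ` Gam n \<subseteq> U \<and>
     rspan hbar U (Kfield n) = Skew l p n \<and>
     lspan hbar (Kfield n) U = Skew l p n"

end

theory Submission
  imports Defs
begin

section \<open>Polynomial algebra\<close>

lemma mconst_add: "mconst (a + b) = mconst a + mconst b"
  by (simp add: mconst_def single_add)
lemma mconst_mult: "mconst (a * b) = mconst a * mconst b"
  by (simp add: mconst_def mult_single)
lemma mconst_0 [simp]: "mconst 0 = 0"
  by (simp add: mconst_def)
lemma mconst_1 [simp]: "mconst 1 = 1"
  by (simp add: mconst_def)
lemma mconst_uminus: "mconst (- a) = - mconst a"
  by (simp add: mconst_def single_uminus)

lemma pm_expansion:
  fixes p :: "'a \<Rightarrow>\<^sub>0 'b::comm_monoid_add"
  shows "p = (\<Sum>k\<in>Poly_Mapping.keys p. Poly_Mapping.single k (Poly_Mapping.lookup p k))"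
proof -
  have *: "finite I \<Longrightarrow> Poly_Mapping.lookup (\<Sum>k\<in>I. Poly_Mapping.single k (Poly_Mapping.lookup p k)) j =
            (if j \<in> I then Poly_Mapping.lookup p j else 0)" for I j
    by (induction I rule: finite_induct) (auto simp: lookup_single lookup_add when_def)
  show ?thesis
    by (rule poly_mapping_eqI) (fastforce simp add: in_keys_iff *)
qed

lemma pm_induct [case_names zero single add]:
  fixes p :: "'a \<Rightarrow>\<^sub>0 'b::comm_monoid_add"
  assumes "P 0" "\<And>k v. P (Poly_Mapping.single k v)" "\<And>f g. P f \<Longrightarrow> P g \<Longrightarrow> P (f + g)"
  shows "P p"
proof -
  have "P (\<Sum>k\<in>I. Poly_Mapping.single k (Poly_Mapping.lookup p k))" if "finite I" for I
    using that by (induction I rule: finite_induct) (auto intro: assms)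
  then show ?thesis using pm_expansion[of p] by (metis finite_keys)
qed

definition mon :: "(nat \<Rightarrow> mpoly) \<Rightarrow> (nat \<Rightarrow>\<^sub>0 nat) \<Rightarrow> mpoly" where
  "mon \<sigma> m = (\<Prod>j\<in>Poly_Mapping.keys m. \<sigma> j ^ Poly_Mapping.lookup m j)"

lemma msubst_mon: "msubst \<sigma> p = (\<Sum>m\<in>Poly_Mapping.keys p. mconst (Poly_Mapping.lookup p m) * mon \<sigma> m)"
  by (simp add: msubst_def mon_def)

lemma mon_superset:
  assumes "finite A" "Poly_Mapping.keys m \<subseteq> A"
  shows "mon \<sigma> m = (\<Prod>j\<in>A. \<sigma> j ^ Poly_Mapping.lookup m j)"
  unfolding mon_def
  by (rule prod.mono_neutral_left) (auto simp: assms in_keys_iff)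

lemma mon_add: "mon \<sigma> (m + m') = mon \<sigma> m * mon \<sigma> m'"
proof -
  let ?A = "Poly_Mapping.keys m \<union> Poly_Mapping.keys m'"
  have "mon \<sigma> (m + m') = (\<Prod>j\<in>?A. \<sigma> j ^ Poly_Mapping.lookup (m + m') j)"
    by (rule mon_superset) (auto simp: keys_add)
  also have "\<dots> = (\<Prod>j\<in>?A. \<sigma> j ^ Poly_Mapping.lookup m j) * (\<Prod>j\<in>?A. \<sigma> j ^ Poly_Mapping.lookup m' j)"
    by (simp add: lookup_add power_add prod.distrib)
  also have "\<dots> = mon \<sigma> m * mon \<sigma> m'"
    using mon_superset[of ?A m \<sigma>] mon_superset[of ?A m' \<sigma>] by auto
  finally show ?thesis .
qed

lemma mon_0 [simp]: "mon \<sigma> 0 = 1"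
  by (simp add: mon_def)

lemma msubst_superset:
  assumes "finite A" "Poly_Mapping.keys p \<subseteq> A"
  shows "msubst \<sigma> p = (\<Sum>m\<in>A. mconst (Poly_Mapping.lookup p m) * mon \<sigma> m)"
  unfolding msubst_mon
  by (rule sum.mono_neutral_left) (auto simp: assms in_keys_iff)

lemma msubst_0 [simp]: "msubst \<sigma> 0 = 0"
  by (simp add: msubst_def)

lemma msubst_add: "msubst \<sigma> (p + q) = msubst \<sigma> p + msubst \<sigma> q"
proof -
  let ?A = "Poly_Mapping.keys p \<union> Poly_Mapping.keys q"
  have "msubst \<sigma> (p + q) = (\<Sum>m\<in>?A. mconst (Poly_Mapping.lookup (p + q) m) * mon \<sigma> m)"
    by (rule msubst_superset) (auto simp: keys_add)
  also have "\<dots> = (\<Sum>m\<in>?A. mconst (Poly_Mapping.lookup p m) * mon \<sigma> m) + (\<Sum>m\<in>?A. mconst (Poly_Mapping.lookup q m) * mon \<sigma> m)"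
    by (simp add: lookup_add mconst_add distrib_right sum.distrib)
  also have "\<dots> = msubst \<sigma> p + msubst \<sigma> q"
    using msubst_superset[of ?A p \<sigma>] msubst_superset[of ?A q \<sigma>] by auto
  finally show ?thesis .
qed

lemma msubst_single: "msubst \<sigma> (Poly_Mapping.single m c) = mconst c * mon \<sigma> m"
  by (simp add: msubst_mon)

lemma msubst_mult: "msubst \<sigma> (p * q) = msubst \<sigma> p * msubst \<sigma> q"
proof (induction p rule: pm_induct)
  case zero then show ?case by simp
next
  case (add f g) then show ?case by (simp add: distrib_right msubst_add)
next
  case (single k v)
  show ?case
  proof (induction q rule: pm_induct)
    case zero then show ?case by simp
  next
    case (add f g) then show ?case by (simp add: distrib_left msubst_add)
  next
    case (single k' v')
    then show ?case by (simp add: mult_single msubst_single mon_add mconst_mult ac_simps)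
  qed
qed

lemma msubst_1 [simp]: "msubst \<sigma> 1 = 1"
proof -
  have "msubst \<sigma> (Poly_Mapping.single 0 1) = mconst 1 * mon \<sigma> 0" by (rule msubst_single)
  then show ?thesis by simp
qed

lemma msubst_mconst [simp]: "msubst \<sigma> (mconst c) = mconst c"
proof -
  have "msubst \<sigma> (Poly_Mapping.single 0 c) = mconst c * mon \<sigma> 0" by (rule msubst_single)
  then show ?thesis by (simp add: mconst_def)
qed

lemma msubst_mvar [simp]: "msubst \<sigma> (mvar j) = \<sigma> j"
  by (simp add: mvar_def msubst_single mon_def)

lemma msubst_uminus: "msubst \<sigma> (- p) = - msubst \<sigma> p"
proof -
  have "msubst \<sigma> (- p + p) = msubst \<sigma> (- p) + msubst \<sigma> p" by (rule msubst_add)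
  then have "msubst \<sigma> (- p) + msubst \<sigma> p = 0" by simp
  then show ?thesis by (simp add: eq_neg_iff_add_eq_0)
qed

lemma msubst_diff: "msubst \<sigma> (p - q) = msubst \<sigma> p - msubst \<sigma> q"
  by (simp only: diff_conv_add_uminus msubst_add msubst_uminus)

lemma msubst_power: "msubst \<sigma> (p ^ k) = msubst \<sigma> p ^ k"
  by (induction k) (simp_all add: msubst_mult)

lemma msubst_prod: "msubst \<sigma> (\<Prod>i\<in>I. f i) = (\<Prod>i\<in>I. msubst \<sigma> (f i))"
  by (induction I rule: infinite_finite_induct) (simp_all add: msubst_mult)

lemma msubst_sum: "msubst \<sigma> (\<Sum>i\<in>I. f i) = (\<Sum>i\<in>I. msubst \<sigma> (f i))"
  by (induction I rule: infinite_finite_induct) (simp_all add: msubst_add)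

lemma msubst_mon_comp: "msubst \<tau> (mon \<sigma> m) = mon (\<lambda>j. msubst \<tau> (\<sigma> j)) m"
  unfolding mon_def by (simp only: msubst_prod msubst_power)

lemma msubst_comp: "msubst \<tau> (msubst \<sigma> p) = msubst (\<lambda>j. msubst \<tau> (\<sigma> j)) p"
proof -
  have "msubst \<tau> (msubst \<sigma> p) = msubst \<tau> (\<Sum>m\<in>Poly_Mapping.keys p. mconst (Poly_Mapping.lookup p m) * mon \<sigma> m)"
    by (simp only: msubst_mon[of \<sigma> p])
  also have "\<dots> = (\<Sum>m\<in>Poly_Mapping.keys p. mconst (Poly_Mapping.lookup p m) * mon (\<lambda>j. msubst \<tau> (\<sigma> j)) m)"
    by (simp only: msubst_sum msubst_mult msubst_mconst msubst_mon_comp)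
  also have "\<dots> = msubst (\<lambda>j. msubst \<tau> (\<sigma> j)) p"
    by (simp only: msubst_mon)
  finally show ?thesis .
qed

lemma mvar_power: "mvar j ^ k = Poly_Mapping.single (Poly_Mapping.single j k) 1"
  by (induction k) (simp_all add: mvar_def mult_single single_add[symmetric])

lemma mon_mvar: "mon mvar m = Poly_Mapping.single m 1"
proof (induction m rule: pm_induct)
  case zero then show ?case by simp
next
  case (add f g) then show ?case by (simp add: mon_add mult_single)
next
  case (single k v) then show ?case by (simp add: mon_def mvar_power)
qed

lemma msubst_id [simp]: "msubst mvar p = p"
proof (induction p rule: pm_induct)
  case zero then show ?case by simp
next
  case (add f g) then show ?case by (simp add: msubst_add)
next
  case (single k v) then show ?case by (simp add: msubst_single mon_mvar mconst_def mult_single)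
qed

lemma msubst_cong: "(\<And>j. \<sigma> j = \<tau> j) \<Longrightarrow> msubst \<sigma> p = msubst \<tau> p"
  by (metis ext)


lemma keys_mconst_sub: "Poly_Mapping.keys (mconst c) \<subseteq> {0}"
  by (simp add: mconst_def)

lemma Gam_0 [simp]: "0 \<in> Gam n" by (simp add: Gam_def)
lemma Gam_mconst [simp]: "mconst c \<in> Gam n"
  by (auto simp: Gam_def mconst_def)
lemma Gam_1 [simp]: "1 \<in> Gam n"
  using Gam_mconst[of 1 n] by simp
lemma Gam_mvar: "j < n \<Longrightarrow> mvar j \<in> Gam n"
  by (auto simp: Gam_def mvar_def)
lemma Gam_add: "p \<in> Gam n \<Longrightarrow> q \<in> Gam n \<Longrightarrow> p + q \<in> Gam n"
  unfolding Gam_def using keys_add[of p q] by blast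
lemma Gam_uminus: "p \<in> Gam n \<Longrightarrow> - p \<in> Gam n"
  unfolding Gam_def by simp
lemma Gam_diff: "p \<in> Gam n \<Longrightarrow> q \<in> Gam n \<Longrightarrow> p - q \<in> Gam n"
  using Gam_add[of p n "-q"] Gam_uminus[of q n] by simp
lemma Gam_mult: "p \<in> Gam n \<Longrightarrow> q \<in> Gam n \<Longrightarrow> p * q \<in> Gam n"
proof -
  assume p: "p \<in> Gam n" and q: "q \<in> Gam n"
  show "p * q \<in> Gam n"
    unfolding Gam_def mem_Collect_eq
  proof (intro ballI)
    fix m j assume m: "m \<in> Poly_Mapping.keys (p * q)" and j: "j \<in> Poly_Mapping.keys m"
    from m keys_mult[of p q] obtain a b where ab: "m = a + b" "a \<in> Poly_Mapping.keys p" "b \<in> Poly_Mapping.keys q"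
      by blast
    from j ab keys_add[of a b] have "j \<in> Poly_Mapping.keys a \<or> j \<in> Poly_Mapping.keys b" by blast
    then show "j < n" using p q ab unfolding Gam_def by blast
  qed
qed
lemma Gam_power: "p \<in> Gam n \<Longrightarrow> p ^ k \<in> Gam n"
  by (induction k) (simp_all add: Gam_mult)
lemma Gam_sum: "(\<And>i. i \<in> I \<Longrightarrow> f i \<in> Gam n) \<Longrightarrow> (\<Sum>i\<in>I. f i) \<in> Gam n"
  by (induction I rule: infinite_finite_induct) (simp_all add: Gam_add)
lemma Gam_prod: "(\<And>i. i \<in> I \<Longrightarrow> f i \<in> Gam n) \<Longrightarrow> (\<Prod>i\<in>I. f i) \<in> Gam n"
  by (induction I rule: infinite_finite_induct) (simp_all add: Gam_mult)

lemma Gam_msubst: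
  assumes "\<And>j. j < n \<Longrightarrow> \<sigma> j \<in> Gam n" "p \<in> Gam n"
  shows "msubst \<sigma> p \<in> Gam n"
  unfolding msubst_def
proof (intro Gam_sum Gam_mult Gam_mconst Gam_prod Gam_power)
  fix m j assume "m \<in> Poly_Mapping.keys p" "j \<in> Poly_Mapping.keys m"
  then have "j < n" using assms(2) by (auto simp: Gam_def)
  then show "\<sigma> j \<in> Gam n" by (rule assms(1))
qed

section \<open>Substitutions attached to group elements\<close>

definition sig :: "complex \<Rightarrow> grp \<Rightarrow> nat \<Rightarrow> mpoly" where
  "sig hbar g = (case g of (t, w) \<Rightarrow> (\<lambda>j. mvar (w j) + mconst (hbar * of_int (t (w j)))))"

definition ginv :: "grp \<Rightarrow> grp" where
  "ginv g = (case g of (t, w) \<Rightarrow> ((\<lambda>k. - t (w k)), inv w))"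

lemma gact_sig: "gact hbar g = rf_map (msubst (sig hbar g))"
  by (cases g) (simp add: gact_def sig_def)

lemma sig_inv1:
  assumes "bij (snd g)"
  shows "msubst (sig hbar g) (sig hbar (ginv g) j) = mvar j"
proof (cases g)
  case (Pair t w)
  with assms have b: "w (inv w j) = j" by (simp add: bij_def surj_f_inv_f)
  show ?thesis using b
    by (simp add: Pair sig_def ginv_def msubst_add mconst_add[symmetric])
qed

lemma sig_inv2:
  assumes "bij (snd g)"
  shows "msubst (sig hbar (ginv g)) (sig hbar g j) = mvar j"
proof (cases g)
  case (Pair t w)
  with assms have b: "inv w (w j) = j" by (simp add: bij_def inv_f_f)
  show ?thesis using b
    by (simp add: Pair sig_def ginv_def msubst_add add.assoc mconst_add[symmetric])
qed

lemma msubst_sig_left_inv: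
  assumes "bij (snd g)"
  shows "msubst (sig hbar (ginv g)) (msubst (sig hbar g) p) = p"
  by (simp add: msubst_comp sig_inv2[OF assms])

lemma bij_ginv: "bij (snd g) \<Longrightarrow> bij (snd (ginv g))"
  by (cases g) (simp add: ginv_def bij_imp_bij_inv)

lemma msubst_sig_right_inv:
  assumes "bij (snd g)"
  shows "msubst (sig hbar g) (msubst (sig hbar (ginv g)) p) = p"
  by (simp add: msubst_comp sig_inv1[OF assms])

lemma msubst_sig_inj:
  assumes "bij (snd g)"
  shows "inj (msubst (sig hbar g))"
  by (metis injI msubst_sig_left_inv[OF assms])

section \<open>Extension to fractions\<close>

lemma rf_map_Fract:
  assumes inj: "inj \<phi>" and mult: "\<And>a b. \<phi> (a * b) = \<phi> a * \<phi> b" and z: "\<phi> 0 = 0"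
    and q: "q \<noteq> 0"
  shows "rf_map \<phi> (Fract p q) = Fract (\<phi> p) (\<phi> q)"
proof -
  have nz: "\<phi> x \<noteq> 0" if "x \<noteq> 0" for x
    using inj z that by (metis injD)
  show ?thesis
    unfolding rf_map_def
  proof (rule someI2)
    show "\<exists>p' q'. q' \<noteq> 0 \<and> Fract p q = Fract p' q' \<and> Fract (\<phi> p) (\<phi> q) = Fract (\<phi> p') (\<phi> q')"
      using q by blast
  next
    fix y assume "\<exists>p' q'. q' \<noteq> 0 \<and> Fract p q = Fract p' q' \<and> y = Fract (\<phi> p') (\<phi> q')"
    then obtain p' q' where h: "q' \<noteq> 0" "Fract p q = Fract p' q'" "y = Fract (\<phi> p') (\<phi> q')" by blast
    from h q have "p * q' = p' * q" by (simp add: eq_fract)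
    then have "\<phi> p * \<phi> q' = \<phi> p' * \<phi> q" by (metis mult)
    then show "y = Fract (\<phi> p) (\<phi> q)" using h nz q by (simp add: eq_fract)
  qed
qed

lemma gact_Fract:
  assumes "bij (snd g)" "q \<noteq> 0"
  shows "gact hbar g (Fract p q) = Fract (msubst (sig hbar g) p) (msubst (sig hbar g) q)"
  unfolding gact_sig
  by (rule rf_map_Fract[OF msubst_sig_inj[OF assms(1)] msubst_mult msubst_0 assms(2)])

lemma msubst_sig_nz:
  assumes "bij (snd g)" "q \<noteq> 0"
  shows "msubst (sig hbar g) q \<noteq> 0"
  using msubst_sig_inj[OF assms(1), of hbar] assms(2) by (metis injD msubst_0)

lemma Fract_eq_0_iff: "q \<noteq> 0 \<Longrightarrow> Fract p q = 0 \<longleftrightarrow> p = 0"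
  by (simp add: Zero_fract_def eq_fract)

lemma gact_0 [simp]: "bij (snd g) \<Longrightarrow> gact hbar g 0 = 0"
  by (simp add: Zero_fract_def gact_Fract)

lemma gact_nz:
  assumes "bij (snd g)" "x \<noteq> 0"
  shows "gact hbar g x \<noteq> 0"
proof -
  obtain p q where x: "x = Fract p q" "q \<noteq> 0" by (cases x)
  with assms have "p \<noteq> 0" by (auto simp: Fract_eq_0_iff)
  then show ?thesis using x assms
    by (simp add: gact_Fract Fract_eq_0_iff msubst_sig_nz)
qed

lemma gact_inv:
  assumes "bij (snd g)"
  shows "gact hbar g (gact hbar (ginv g) x) = x"
proof -
  obtain p q where x: "x = Fract p q" "q \<noteq> 0" by (cases x)
  show ?thesis using x assms bij_ginv[OF assms]
    by (simp add: gact_Fract msubst_sig_nz msubst_sig_right_inv)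
qed

lemma emb_eq_iff [simp]: "emb p = emb q \<longleftrightarrow> p = q"
  by (simp add: emb_def eq_fract)

lemma gact_emb:
  assumes "bij (snd g)"
  shows "gact hbar g (emb p) = emb (msubst (sig hbar g) p)"
  using assms by (simp add: emb_def gact_Fract)

lemma sig_gid: "sig hbar gid = mvar"
  by (simp add: sig_def gid_def fun_eq_iff)

lemma gact_gid [simp]: "gact hbar gid x = x"
proof -
  obtain p q where x: "x = Fract p q" "q \<noteq> 0" by (cases x)
  have "bij (snd gid)" by (simp add: gid_def)
  then show ?thesis using x by (simp add: gact_Fract sig_gid)
qed

lemma K_Fract: "p \<in> Gam n \<Longrightarrow> q \<in> Gam n \<Longrightarrow> q \<noteq> 0 \<Longrightarrow> Fract p q \<in> Kfield n"
  by (auto simp: Kfield_def)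
lemma K_0 [simp]: "0 \<in> Kfield n"
  using K_Fract[of 0 n 1] by (simp add: Zero_fract_def)
lemma K_1 [simp]: "1 \<in> Kfield n"
  using K_Fract[of 1 n 1] by (simp add: One_fract_def)
lemma K_emb: "p \<in> Gam n \<Longrightarrow> emb p \<in> Kfield n"
  by (simp add: emb_def K_Fract)
lemma K_add: "x \<in> Kfield n \<Longrightarrow> y \<in> Kfield n \<Longrightarrow> x + y \<in> Kfield n"
proof -
  assume "x \<in> Kfield n" "y \<in> Kfield n"
  then obtain a b c d where h: "x = Fract a b" "y = Fract c d" "a \<in> Gam n" "b \<in> Gam n" "c \<in> Gam n" "d \<in> Gam n" "b \<noteq> 0" "d \<noteq> 0"
    by (auto simp: Kfield_def)
  then show ?thesis by (simp add: K_Fract Gam_mult Gam_add)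
qed
lemma K_mult: "x \<in> Kfield n \<Longrightarrow> y \<in> Kfield n \<Longrightarrow> x * y \<in> Kfield n"
proof -
  assume "x \<in> Kfield n" "y \<in> Kfield n"
  then obtain a b c d where h: "x = Fract a b" "y = Fract c d" "a \<in> Gam n" "b \<in> Gam n" "c \<in> Gam n" "d \<in> Gam n" "b \<noteq> 0" "d \<noteq> 0"
    by (auto simp: Kfield_def)
  then show ?thesis by (simp add: K_Fract Gam_mult)
qed
lemma K_uminus: "x \<in> Kfield n \<Longrightarrow> - x \<in> Kfield n"
proof -
  assume "x \<in> Kfield n"
  then obtain a b where h: "x = Fract a b" "a \<in> Gam n" "b \<in> Gam n" "b \<noteq> 0"
    by (auto simp: Kfield_def)
  then show ?thesis by (simp add: K_Fract Gam_uminus)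
qed
lemma K_divide: "x \<in> Kfield n \<Longrightarrow> y \<in> Kfield n \<Longrightarrow> x / y \<in> Kfield n"
proof -
  assume "x \<in> Kfield n" "y \<in> Kfield n"
  then obtain a b c d where h: "x = Fract a b" "y = Fract c d" "a \<in> Gam n" "b \<in> Gam n" "c \<in> Gam n" "d \<in> Gam n" "b \<noteq> 0" "d \<noteq> 0"
    by (auto simp: Kfield_def)
  show "x / y \<in> Kfield n"
  proof (cases "c = 0")
    case True then show ?thesis using h by (simp add: Zero_fract_def[symmetric] fract_collapse)
  next
    case False then show ?thesis using h by (simp add: K_Fract Gam_mult)
  qed
qed
lemma K_sum: "(\<And>i. i \<in> I \<Longrightarrow> f i \<in> Kfield n) \<Longrightarrow> (\<Sum>i\<in>I. f i) \<in> Kfield n"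
  by (induction I rule: infinite_finite_induct) (simp_all add: K_add)

lemma gact_K:
  assumes "bij (snd g)" "\<And>j. j < n \<Longrightarrow> snd g j < n" "x \<in> Kfield n"
  shows "gact hbar g x \<in> Kfield n"
proof -
  obtain p q where x: "x = Fract p q" "q \<noteq> 0" "p \<in> Gam n" "q \<in> Gam n"
    using assms(3) by (auto simp: Kfield_def)
  have s: "sig hbar g j \<in> Gam n" if "j < n" for j
    using assms(2)[OF that] by (cases g) (auto simp: sig_def intro!: Gam_add Gam_mvar)
  show ?thesis using x assms(1)
    by (simp add: gact_Fract K_Fract Gam_msubst s msubst_sig_nz)
qed


lemma gmul_simp: "gmul (t, w) (t', w') = ((\<lambda>k. t k + t' (inv w k)), w \<circ> w')"
  by (simp add: gmul_def)

lemma gmul_gid_left [simp]: "gmul gid g = g"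
  by (cases g) (simp add: gmul_def gid_def)
lemma gmul_gid_right [simp]: "gmul g gid = g"
  by (cases g) (simp add: gmul_def gid_def)

lemma Grp_bij: "g \<in> Grp l p n \<Longrightarrow> bij (snd g)"
  by (auto simp: Grp_def permutes_bij)
lemma Grp_lt: "g \<in> Grp l p n \<Longrightarrow> j < n \<Longrightarrow> snd g j < n"
proof -
  assume "g \<in> Grp l p n" "j < n"
  then obtain t w where "g = (t, w)" "w permutes {..<n}" by (auto simp: Grp_def)
  then show ?thesis using permutes_in_image[of w "{..<n}" j] \<open>j < n\<close> by simp
qed

lemma gid_Grp [simp]: "gid \<in> Grp l p n"
  by (auto simp: Grp_def gid_def Tlat_def permutes_id intro!: exI[of _ "\<lambda>_. 0"])

lemma gmul_Grp:
  assumes "x \<in> Grp l p n" "y \<in> Grp l p n"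
  shows "gmul x y \<in> Grp l p n"
proof -
  obtain t w t' w' where xy: "x = (t, w)" "y = (t', w')" by (cases x, cases y)
  with assms have w: "w permutes {..<n}" and w': "w' permutes {..<n}" and t: "t \<in> Tlat l p n" and t': "t' \<in> Tlat l p n"
    by (auto simp: Grp_def)
  have iw: "inv w permutes {..<n}" using w by (rule permutes_inv)
  from t obtain a b where ab: "\<forall>j\<ge>n. t j = 0" "\<forall>j<n. t j = a j * int l + b * int (l div p)"
    by (auto simp: Tlat_def)
  from t' obtain a' b' where ab': "\<forall>j\<ge>n. t' j = 0" "\<forall>j<n. t' j = a' j * int l + b' * int (l div p)"
    by (auto simp: Tlat_def)
  have "(\<lambda>k. t k + t' (inv w k)) \<in> Tlat l p n"
    unfolding Tlat_def mem_Collect_eq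
  proof (intro conjI allI impI exI)
    fix j :: nat assume "n \<le> j"
    then have "inv w j = j" using iw by (simp add: permutes_not_in)
    then show "t j + t' (inv w j) = 0" using ab ab' \<open>n \<le> j\<close> by simp
  next
    fix j assume "j < n"
    then have "inv w j < n" using permutes_in_image[OF iw, of j] by simp
    then show "t j + t' (inv w j) = (a j + a' (inv w j)) * int l + (b + b') * int (l div p)"
      using ab ab' \<open>j < n\<close> by (simp add: algebra_simps)
  qed
  moreover have "w \<circ> w' permutes {..<n}" using w w' by (rule permutes_compose[rotated])
  ultimately show ?thesis by (simp add: xy gmul_simp Grp_def)
qed

section \<open>Skew ring computations\<close>

lemma skSupp_skterm [simp]: "skSupp (skterm a g) = (if a = 0 then {} else {g})"
  by (auto simp: skSupp_def skterm_def)

lemma skterm_0 [simp]: "skterm 0 g = sk0"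
  by (simp add: skterm_def sk0_def fun_eq_iff)

lemma skSupp_sk0 [simp]: "skSupp sk0 = {}"
  by (simp add: skSupp_def sk0_def)

lemma skmul_skterm:
  assumes "a \<noteq> 0" "b \<noteq> 0"
  shows "skmul hbar (skterm a x) (skterm b y) = skterm (a * gact hbar x b) (gmul x y)"
proof (rule ext)
  fix z
  have "{(u, v). u \<in> skSupp (skterm a x) \<and> v \<in> skSupp (skterm b y) \<and> gmul u v = z} =
        (if gmul x y = z then {(x, y)} else {})"
    using assms by auto
  then show "skmul hbar (skterm a x) (skterm b y) z = skterm (a * gact hbar x b) (gmul x y) z"
    using assms by (simp add: skmul_def skterm_def)
qed

lemma skSupp_skscal: "a \<noteq> 0 \<Longrightarrow> skSupp (skscal a) = {gid}"
  by (simp add: skscal_def)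

lemma skmul_scal_left: "skmul hbar (skscal a) F = (\<lambda>g. a * F g)"
proof (rule ext)
  fix z
  show "skmul hbar (skscal a) F z = a * F z"
  proof (cases "a = 0")
    case True then show ?thesis by (simp add: skmul_def skscal_def)
  next
    case False
    have "{(u, v). u \<in> skSupp (skscal a) \<and> v \<in> skSupp F \<and> gmul u v = z} =
        (if F z \<noteq> 0 then {(gid, z)} else {})"
      unfolding skSupp_skscal[OF False] by (auto simp: skSupp_def)
    then show ?thesis using False by (simp add: skmul_def skscal_def skterm_def)
  qed
qed

lemma skmul_scal_right: "a \<noteq> 0 \<Longrightarrow> skmul hbar F (skscal a) = (\<lambda>g. F g * gact hbar g a)"
proof (rule ext)
  fix z assume a: "a \<noteq> 0"
  have "{(u, v). u \<in> skSupp F \<and> v \<in> skSupp (skscal a) \<and> gmul u v = z} =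
      (if F z \<noteq> 0 then {(z, gid)} else {})"
    unfolding skSupp_skscal[OF a] by (auto simp: skSupp_def)
  then show "skmul hbar F (skscal a) z = F z * gact hbar z a"
    using a by (simp add: skmul_def skscal_def skterm_def)
qed

lemma skscal_add: "skadd (skscal a) (skscal b) = skscal (a + b)"
  by (simp add: skadd_def skscal_def skterm_def fun_eq_iff)

lemma skscal_mult: "skmul hbar (skscal a) (skscal b) = skscal (a * b)"
  by (simp only: skmul_scal_left) (simp add: skscal_def skterm_def fun_eq_iff)

lemma Skew_iff: "F \<in> Skew l p n \<longleftrightarrow> finite (skSupp F) \<and> skSupp F \<subseteq> Grp l p n \<and> (\<forall>g. F g \<in> Kfield n)"
  by (auto simp: Skew_def skSupp_def) (metis K_0)

lemma sk0_Skew [simp]: "sk0 \<in> Skew l p n"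
  by (simp add: Skew_iff) (simp add: sk0_def)

lemma skterm_Skew: "a \<in> Kfield n \<Longrightarrow> g \<in> Grp l p n \<Longrightarrow> skterm a g \<in> Skew l p n"
  by (simp add: Skew_iff) (simp add: skterm_def sk0_def)

lemma skadd_Skew:
  assumes "F \<in> Skew l p n" "H \<in> Skew l p n"
  shows "skadd F H \<in> Skew l p n"
proof -
  have "skSupp (skadd F H) \<subseteq> skSupp F \<union> skSupp H"
    by (auto simp: skSupp_def skadd_def)
  then show ?thesis using assms by (auto simp: Skew_iff skadd_def intro: finite_subset K_add)
qed

lemma skmul_Skew:
  assumes F: "F \<in> Skew l p n" and H: "H \<in> Skew l p n"
  shows "skmul hbar F H \<in> Skew l p n"
proof -
  let ?S = "\<lambda>g. {(x, y). x \<in> skSupp F \<and> y \<in> skSupp H \<and> gmul x y = g}"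
  have sub: "skSupp (skmul hbar F H) \<subseteq> (\<lambda>(x, y). gmul x y) ` (skSupp F \<times> skSupp H)"
  proof
    fix g assume "g \<in> skSupp (skmul hbar F H)"
    have "?S g \<noteq> {}"
    proof
      assume e: "?S g = {}"
      have "skmul hbar F H g = 0" by (simp only: skmul_def e sum.empty)
      then show False using \<open>g \<in> skSupp (skmul hbar F H)\<close> by (simp add: skSupp_def)
    qed
    then obtain x y where "(x, y) \<in> ?S g" by blast
    then show "g \<in> (\<lambda>(x, y). gmul x y) ` (skSupp F \<times> skSupp H)" by force
  qed
  have fin: "finite (skSupp (skmul hbar F H))"
    using F H by (auto simp: Skew_iff intro: finite_subset[OF sub])
  have grp: "skSupp (skmul hbar F H) \<subseteq> Grp l p n"
    using sub F H by (force simp: Skew_iff intro: gmul_Grp)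
  have val: "skmul hbar F H g \<in> Kfield n" for g
    unfolding skmul_def
  proof (rule K_sum)
    fix xy assume "xy \<in> ?S g"
    then obtain x y where xy: "xy = (x, y)" "x \<in> skSupp F" "y \<in> skSupp H" by auto
    then have "x \<in> Grp l p n" using F by (auto simp: Skew_iff)
    have fk: "F x \<in> Kfield n" using F unfolding Skew_iff by blast
    have hk: "H y \<in> Kfield n" using H unfolding Skew_iff by blast
    show "(case xy of (x, y) \<Rightarrow> F x * gact hbar x (H y)) \<in> Kfield n"
      using xy fk hk \<open>x \<in> Grp l p n\<close> by (auto intro!: K_mult gact_K Grp_bij Grp_lt)
  qed
  show ?thesis using fin grp val by (simp add: Skew_iff)
qed


lemma swapw_transpose: "swapw i = transpose i (Suc i)"
  by (simp add: swapw_def transpose_def fun_eq_iff)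

lemma swapw_permutes: "Suc i < n \<Longrightarrow> swapw i permutes {..<n}"
  unfolding swapw_transpose by (rule permutes_swap_id) auto

lemma cycw_permutes:
  assumes "0 < n"
  shows "cycw n i permutes {..<n}"
proof (rule bij_imp_permutes)
  have inj: "inj_on (cycw n i) {..<n}"
  proof (rule inj_onI)
    fix a b assume ab: "a \<in> {..<n}" "b \<in> {..<n}" "cycw n i a = cycw n i b"
    then have "(a + i) mod n = (b + i) mod n" by (simp add: cycw_def)
    then have "a mod n = b mod n" by (simp add: nat_mod_eq_iff)
    then show "a = b" using ab by simp
  qed
  have sub: "cycw n i ` {..<n} \<subseteq> {..<n}" using assms by (auto simp: cycw_def)
  have "cycw n i ` {..<n} = {..<n}" by (rule endo_inj_surj[OF _ sub inj]) simp
  then show "bij_betw (cycw n i) {..<n} {..<n}" using inj by (simp add: bij_betw_def)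
next
  fix x assume "x \<notin> {..<n}" then show "cycw n i x = x" by (simp add: cycw_def)
qed

lemma Grp_intro: "t \<in> Tlat l p n \<Longrightarrow> w permutes {..<n} \<Longrightarrow> (t, w) \<in> Grp l p n"
  by (simp add: Grp_def)

lemma Tlat_intro:
  assumes "\<And>j. n \<le> j \<Longrightarrow> t j = 0" "\<And>j. j < n \<Longrightarrow> t j = a j * int l + b * int (l div p)"
  shows "t \<in> Tlat l p n"
  using assms unfolding Tlat_def by blast

lemma emb_add: "emb (a + b) = emb a + emb b"
  by (simp add: emb_def)
lemma emb_mult: "emb (a * b) = emb a * emb b"
  by (simp add: emb_def)
lemma emb_0 [simp]: "emb 0 = 0"
  by (simp add: emb_def Zero_fract_def)
lemma emb_1 [simp]: "emb 1 = 1"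
  by (simp add: emb_def One_fract_def)
lemma emb_uminus: "emb (- a) = - emb a"
  by (simp add: emb_def)
lemma emb_diff: "emb (a - b) = emb a - emb b"
  by (simp add: emb_def)

lemma gens_Skew:
  assumes n: "0 < n" and l: "0 < l" and p: "0 < p" "p dvd l"
  shows "gens l p n hbar c cm \<subseteq> Skew l p n"
proof
  fix x assume x: "x \<in> gens l p n hbar c cm"
  have zG: "(\<lambda>_. 0::int) \<in> Tlat l p n"
    by (rule Tlat_intro[where a="\<lambda>_. 0" and b=0]) auto
  have Kc: "emb (mconst z) \<in> Kfield n" for z by (simp add: K_emb)
  consider
      (a) i where "x = skscal (emb (mvar i))" "i < n"
    | (b) i where "x = skadd (skterm (1 + emb (mconst (c * of_nat l)) / emb (mvar (Suc i) - mvar i)) ((\<lambda>_. 0), swapw i))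
            (skscal (- (emb (mconst (c * of_nat l)) / emb (mvar (Suc i) - mvar i))))" "Suc i < n"
    | (c) "x = skterm (emb (\<Prod>m<l. mvar 0 + mconst (of_nat l * hbar - spar l cm hbar m)))
             ((\<lambda>k. if k = 0 then int l else 0), cycw n 1)"
    | (d) "x = skterm 1 ((\<lambda>k. if k = n - 1 then - int l else 0), cycw n (n - 1))"
    | (e) "x = skterm (emb (\<Prod>i<n. \<Prod>m<l div p. mvar i + mconst (of_nat (l div p) * hbar - spar l cm hbar m)))
             ((\<lambda>k. if k < n then int (l div p) else 0), id)"
    | (f) "x = skterm 1 ((\<lambda>k. if k < n then - int (l div p) else 0), id)"
    | (g) i j where "x = skterm (emb (\<Prod>r<i. \<Prod>m<j * (l div p). mvar r + mconst (of_nat (j * (l div p)) * hbar - spar l cm hbar m)))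
             ((\<lambda>k. if k < n then (if k < i then int (j * (l div p)) else int (j * (l div p)) - int l) else 0),
              cycw n i)" "1 \<le> i" "i \<le> n - 1"
    using x unfolding gens_def by blast
  then show "x \<in> Skew l p n"
  proof cases
    case (a i)
    then show ?thesis unfolding skscal_def
      by (auto intro!: skterm_Skew K_emb Gam_mvar)
  next
    case (b i)
    have G: "((\<lambda>_. 0), swapw i) \<in> Grp l p n"
      using b by (intro Grp_intro zG swapw_permutes)
    have V: "emb (mvar (Suc i) - mvar i) \<in> Kfield n"
      using b by (intro K_emb Gam_diff Gam_mvar) auto
    show ?thesis unfolding b(1) skscal_def
      by (intro skadd_Skew skterm_Skew K_add K_1 K_divide Kc V G K_uminus gid_Grp)
  next
    case c
    have T: "(\<lambda>k. if k = 0 then int l else 0) \<in> Tlat l p n"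
      by (rule Tlat_intro[where a="\<lambda>k. if k = 0 then 1 else 0" and b=0]) (use n in auto)
    show ?thesis unfolding c
      by (intro skterm_Skew K_emb Gam_prod Gam_add Gam_mvar Gam_mconst Grp_intro T cycw_permutes n)
  next
    case d
    have T: "(\<lambda>k. if k = n - 1 then - int l else 0) \<in> Tlat l p n"
      by (rule Tlat_intro[where a="\<lambda>k. if k = n - 1 then -1 else 0" and b=0]) (use n in auto)
    show ?thesis unfolding d
      by (intro skterm_Skew K_1 Grp_intro T cycw_permutes n)
  next
    case e
    have T: "(\<lambda>k. if k < n then int (l div p) else 0) \<in> Tlat l p n"
      by (rule Tlat_intro[where a="\<lambda>k. 0" and b=1]) auto
    show ?thesis unfolding e
      by (intro skterm_Skew K_emb Gam_prod Gam_add Gam_mvar Gam_mconst Grp_intro T permutes_id) auto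
  next
    case f
    have T: "(\<lambda>k. if k < n then - int (l div p) else 0) \<in> Tlat l p n"
      by (rule Tlat_intro[where a="\<lambda>k. 0" and b="-1"]) auto
    show ?thesis unfolding f
      by (intro skterm_Skew K_1 Grp_intro T permutes_id)
  next
    case (g i j)
    have T: "(\<lambda>k. if k < n then (if k < i then int (j * (l div p)) else int (j * (l div p)) - int l) else 0) \<in> Tlat l p n"
      by (rule Tlat_intro[where a="\<lambda>k. if k < i then 0 else -1" and b="int j"]) auto
    show ?thesis unfolding g(1)
      by (intro skterm_Skew K_emb Gam_prod Gam_add Gam_mvar Gam_mconst Grp_intro T cycw_permutes n) (use g in auto)
  qed
qed

lemma subalg_Skew:
  assumes "S \<subseteq> Skew l p n"
  shows "subalg hbar S \<subseteq> Skew l p n"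
proof
  fix x assume "x \<in> subalg hbar S"
  then show "x \<in> Skew l p n"
  proof induction
    case (gen x) then show ?case using assms by blast
  next
    case (const a) then show ?case unfolding skscal_def by (intro skterm_Skew K_emb Gam_mconst gid_Grp)
  next
    case (add x y) then show ?case by (blast intro: skadd_Skew)
  next
    case (mul x y) then show ?case by (blast intro: skmul_Skew)
  qed
qed

lemma subalg_scal_sum:
  "(\<And>i. i \<in> I \<Longrightarrow> skscal (emb (f i)) \<in> subalg hbar S) \<Longrightarrow> skscal (emb (\<Sum>i\<in>I. f i)) \<in> subalg hbar S"
proof (induction I rule: infinite_finite_induct)
  case (infinite A) then show ?case using subalg.const[of 0 hbar S] by simp
next
  case empty then show ?case using subalg.const[of 0 hbar S] by simp
next
  case (insert x F)
  then show ?case by (simp add: emb_add skscal_add[symmetric] subalg.add)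
qed

lemma subalg_scal_prod:
  "(\<And>i. i \<in> I \<Longrightarrow> skscal (emb (f i)) \<in> subalg hbar S) \<Longrightarrow> skscal (emb (\<Prod>i\<in>I. f i)) \<in> subalg hbar S"
proof (induction I rule: infinite_finite_induct)
  case (infinite A) then show ?case using subalg.const[of 1 hbar S] by simp
next
  case empty then show ?case using subalg.const[of 1 hbar S] by simp
next
  case (insert x F)
  then show ?case by (simp add: emb_mult skscal_mult[of hbar, symmetric] subalg.mul)
qed

lemma subalg_scal_power:
  "skscal (emb f) \<in> subalg hbar S \<Longrightarrow> skscal (emb (f ^ k)) \<in> subalg hbar S"
  using subalg_scal_prod[of "{..<k}" "\<lambda>_. f" hbar S] by simp

lemma subalg_scal_mult:
  "skscal (emb f) \<in> subalg hbar S \<Longrightarrow> skscal (emb g) \<in> subalg hbar S \<Longrightarrow> skscal (emb (f * g)) \<in> subalg hbar S"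
  by (simp add: emb_mult skscal_mult[of hbar, symmetric] subalg.mul)

lemma Gam_in_U:
  assumes "q \<in> Gam n"
  shows "skscal (emb q) \<in> sphAlg l p n hbar c cm"
proof -
  have "q = msubst mvar q" by simp
  also have "\<dots> = (\<Sum>m\<in>Poly_Mapping.keys q. mconst (Poly_Mapping.lookup q m) *
     (\<Prod>j\<in>Poly_Mapping.keys m. mvar j ^ Poly_Mapping.lookup m j))" by (simp only: msubst_def)
  finally have q: "q = \<dots>" .
  have v: "skscal (emb (mvar j)) \<in> sphAlg l p n hbar c cm" if "j < n" for j
    unfolding sphAlg_def by (rule subalg.gen) (use that in \<open>auto simp: gens_def\<close>)
  show ?thesis
    unfolding sphAlg_def
    apply (subst q)
    apply (intro subalg_scal_sum subalg_scal_mult subalg_scal_prod subalg_scal_power subalg.const)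
    using v assms unfolding sphAlg_def Gam_def by blast
qed


section \<open>Faithfulness\<close>

lemma single_one_eq_iff: "Poly_Mapping.single a (1::nat) = Poly_Mapping.single b 1 \<longleftrightarrow> a = b"
proof
  assume "Poly_Mapping.single a (1::nat) = Poly_Mapping.single b 1"
  then have "Poly_Mapping.lookup (Poly_Mapping.single a (1::nat)) a = Poly_Mapping.lookup (Poly_Mapping.single b 1) a"
    by simp
  then show "a = b" by (simp add: lookup_single when_def split: if_splits)
qed simp

lemma single_one_nz: "Poly_Mapping.single a (1::nat) \<noteq> 0"
proof
  assume "Poly_Mapping.single a (1::nat) = 0"
  then have "Poly_Mapping.keys (Poly_Mapping.single a (1::nat)) = Poly_Mapping.keys 0" by simp
  then show False by simp
qed

lemma lookup_mvar: "Poly_Mapping.lookup (mvar a) m = (if Poly_Mapping.single a 1 = m then 1 else 0)"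
  by (simp add: mvar_def lookup_single when_def)

lemma lookup_mconst: "Poly_Mapping.lookup (mconst z) m = (if 0 = m then z else 0)"
  by (simp add: mconst_def lookup_single when_def)

lemma single_one_nz': "0 \<noteq> Poly_Mapping.single a (1::nat)"
  using single_one_nz[of a] by metis

lemma lookup_lin_var: "Poly_Mapping.lookup (mvar a + mconst z) (Poly_Mapping.single b 1) = (if a = b then 1 else 0)"
  by (simp only: lookup_add lookup_mvar lookup_mconst single_one_eq_iff single_one_nz' if_False) simp

lemma lookup_lin_0: "Poly_Mapping.lookup (mvar a + mconst z) 0 = z"
  by (simp only: lookup_add lookup_mvar lookup_mconst single_one_nz if_False if_True) simp

lemma lin_nz: "mvar a + mconst z \<noteq> 0"
  using lookup_lin_var[of a z a] by auto

lemma sig_apply: "sig hbar (t, w) j = mvar (w j) + mconst (hbar * of_int (t (w j)))"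
  by (simp add: sig_def)

lemma faithful:
  assumes h: "hbar \<noteq> 0" and g0: "g0 \<in> Grp l p n" and g1: "g1 \<in> Grp l p n" and ne: "g0 \<noteq> g1"
  shows "\<exists>j<n. sig hbar g0 j \<noteq> sig hbar g1 j"
proof (rule ccontr)
  assume "\<not> ?thesis"
  then have eqlt: "\<And>j. j < n \<Longrightarrow> sig hbar g0 j = sig hbar g1 j" by blast
  obtain t0 w0 t1 w1 where gs: "g0 = (t0, w0)" "g1 = (t1, w1)" by (cases g0, cases g1)
  from g0 g1 gs have w0: "w0 permutes {..<n}" and w1: "w1 permutes {..<n}"
    and t0: "\<And>j. n \<le> j \<Longrightarrow> t0 j = 0" and t1: "\<And>j. n \<le> j \<Longrightarrow> t1 j = 0"
    by (auto simp: Grp_def Tlat_def)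
  have eq: "sig hbar g0 j = sig hbar g1 j" for j
  proof (cases "j < n")
    case True then show ?thesis by (rule eqlt)
  next
    case False
    then have "w0 j = j" "w1 j = j" using w0 w1 by (auto simp: permutes_not_in)
    then show ?thesis using False t0 t1 gs by (simp add: sig_apply)
  qed
  have w: "w0 j = w1 j" for j
  proof -
    have "Poly_Mapping.lookup (sig hbar g0 j) (Poly_Mapping.single (w0 j) 1) = Poly_Mapping.lookup (sig hbar g1 j) (Poly_Mapping.single (w0 j) 1)"
      using eq[of j] by simp
    then have "(if w0 j = w0 j then 1 else 0) = (if w1 j = w0 j then (1::complex) else 0)"
      by (simp only: gs sig_apply lookup_lin_var)
    then show ?thesis by (simp split: if_splits)
  qed
  have tw: "t0 (w0 j) = t1 (w0 j)" for j
    using arg_cong[OF eq[of j], of "\<lambda>q. Poly_Mapping.lookup q 0"] h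
    by (simp add: gs sig_apply lookup_lin_0 w)
  have "t0 k = t1 k" for k
  proof -
    have "w0 (inv w0 k) = k" using w0 by (meson permutes_inverses(1))
    then show ?thesis using tw[of "inv w0 k"] by simp
  qed
  then have "t0 = t1" by blast
  moreover have "w0 = w1" using w by blast
  ultimately show False using ne gs by simp
qed

section \<open>Isolation of terms\<close>

lemma mvar_nz: "mvar j \<noteq> 0"
  using lin_nz[of j 0] by simp

lemma emb_nz: "q \<noteq> 0 \<Longrightarrow> emb q \<noteq> 0"
  using emb_eq_iff[of q 0] by simp

lemma mult_op:
  assumes US: "sphAlg l p n hbar c cm \<subseteq> Skew l p n"
    and u: "u \<in> sphAlg l p n hbar c cm" and j: "j < n" and g1: "g1 \<in> Grp l p n"
  shows "(\<lambda>g. u g * (emb (sig hbar g j) - emb (sig hbar g1 j))) \<in> sphAlg l p n hbar c cm"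
proof -
  let ?U = "sphAlg l p n hbar c cm"
  have s1: "sig hbar g1 j \<in> Gam n"
    using g1 j Grp_lt[OF g1 j] by (cases g1) (auto simp: sig_apply intro!: Gam_add Gam_mvar)
  have u1: "skmul hbar u (skscal (emb (mvar j))) \<in> ?U"
    using u Gam_in_U[OF Gam_mvar[OF j]] unfolding sphAlg_def by (rule subalg.mul)
  have u2: "skmul hbar (skscal (emb (- sig hbar g1 j))) u \<in> ?U"
    using Gam_in_U[OF Gam_uminus[OF s1]] u unfolding sphAlg_def by (rule subalg.mul)
  have e1: "skmul hbar u (skscal (emb (mvar j))) = (\<lambda>g. u g * emb (sig hbar g j))"
  proof (rule ext)
    fix g
    show "skmul hbar u (skscal (emb (mvar j))) g = u g * emb (sig hbar g j)"
    proof (cases "u g = 0")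
      case True then show ?thesis by (simp add: skmul_scal_right emb_nz mvar_nz)
    next
      case False
      have "u \<in> Skew l p n" using US u by blast
      then have "skSupp u \<subseteq> Grp l p n" by (simp add: Skew_iff)
      moreover have "g \<in> skSupp u" using False by (simp add: skSupp_def)
      ultimately have "g \<in> Grp l p n" by blast
      then show ?thesis by (simp add: skmul_scal_right emb_nz mvar_nz gact_emb Grp_bij)
    qed
  qed
  have "skadd (skmul hbar u (skscal (emb (mvar j)))) (skmul hbar (skscal (emb (- sig hbar g1 j))) u) =
        (\<lambda>g. u g * (emb (sig hbar g j) - emb (sig hbar g1 j)))"
    by (simp add: e1 skmul_scal_left skadd_def emb_uminus fun_eq_iff algebra_simps)
  moreover have "skadd (skmul hbar u (skscal (emb (mvar j)))) (skmul hbar (skscal (emb (- sig hbar g1 j))) u) \<in> ?U"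
    using u1 u2 unfolding sphAlg_def by (rule subalg.add)
  ultimately show ?thesis by simp
qed

lemma isolate:
  assumes US: "sphAlg l p n hbar c cm \<subseteq> Skew l p n" and h: "hbar \<noteq> 0"
    and fin: "finite S" and S: "S \<subseteq> Grp l p n" and g0: "g0 \<in> Grp l p n" "g0 \<notin> S"
    and u: "u \<in> sphAlg l p n hbar c cm" "u g0 \<noteq> 0"
  shows "\<exists>u'\<in>sphAlg l p n hbar c cm. u' g0 \<noteq> 0 \<and> (\<forall>g\<in>S. u' g = 0) \<and> (\<forall>g. u g = 0 \<longrightarrow> u' g = 0)"
  using fin S g0(2)
proof (induction S rule: finite_induct)
  case empty then show ?case using u by blast
next
  case (insert g1 S)
  have IH: "\<exists>u'\<in>sphAlg l p n hbar c cm. u' g0 \<noteq> 0 \<and> (\<forall>g\<in>S. u' g = 0) \<and> (\<forall>g. u g = 0 \<longrightarrow> u' g = 0)"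
    using insert.IH insert.prems by blast
  then obtain u' where u': "u' \<in> sphAlg l p n hbar c cm" "u' g0 \<noteq> 0" "\<forall>g\<in>S. u' g = 0" "\<forall>g. u g = 0 \<longrightarrow> u' g = 0"
    by blast
  have g1: "g1 \<in> Grp l p n" "g1 \<noteq> g0" using insert.prems by blast+
  obtain j where j: "j < n" "sig hbar g0 j \<noteq> sig hbar g1 j"
    using faithful[OF h g0(1) g1(1) g1(2)[symmetric]] by blast
  let ?v = "\<lambda>g. u' g * (emb (sig hbar g j) - emb (sig hbar g1 j))"
  have v1: "?v \<in> sphAlg l p n hbar c cm" by (rule mult_op[OF US u'(1) j(1) g1(1)])
  have v2: "?v g0 \<noteq> 0"
  proof -
    have "emb (sig hbar g0 j) \<noteq> emb (sig hbar g1 j)" using j(2) by simp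
    then have "emb (sig hbar g0 j) - emb (sig hbar g1 j) \<noteq> 0" by simp
    then show ?thesis using u'(2) by simp
  qed
  have v3: "\<forall>g\<in>insert g1 S. ?v g = 0" using u'(3) by simp
  have v4: "\<forall>g. u g = 0 \<longrightarrow> ?v g = 0" using u'(4) by simp
  show ?case
  proof (rule bexI[of _ ?v])
    show "?v g0 \<noteq> 0 \<and> (\<forall>g\<in>insert g1 S. ?v g = 0) \<and> (\<forall>g. u g = 0 \<longrightarrow> ?v g = 0)"
      using v2 v3 v4 by (intro conjI)
  qed fact
qed

definition Gp :: "nat \<Rightarrow> nat \<Rightarrow> nat \<Rightarrow> complex \<Rightarrow> complex \<Rightarrow> (nat \<Rightarrow> complex) \<Rightarrow> grp set" where
  "Gp l p n hbar c cm = {g. \<exists>a. a \<noteq> 0 \<and> skterm a g \<in> sphAlg l p n hbar c cm}"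

lemma supp_Gp:
  assumes US: "sphAlg l p n hbar c cm \<subseteq> Skew l p n" and h: "hbar \<noteq> 0"
    and u: "u \<in> sphAlg l p n hbar c cm" "u g0 \<noteq> 0"
  shows "g0 \<in> Gp l p n hbar c cm"
proof -
  have uS: "u \<in> Skew l p n" using US u by blast
  let ?S = "skSupp u - {g0}"
  have fin: "finite ?S" and S: "?S \<subseteq> Grp l p n" and g0: "g0 \<in> Grp l p n"
    using uS u(2) by (auto simp: Skew_iff skSupp_def)
  obtain u' where u': "u' \<in> sphAlg l p n hbar c cm" "u' g0 \<noteq> 0" "\<forall>g\<in>?S. u' g = 0" "\<forall>g. u g = 0 \<longrightarrow> u' g = 0"
    using isolate[OF US h fin S g0 _ u] by blast
  have "u' = skterm (u' g0) g0"
  proof (rule ext)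
    fix g show "u' g = skterm (u' g0) g0 g"
    proof (cases "g = g0")
      case True then show ?thesis by (simp add: skterm_def)
    next
      case False
      show ?thesis
      proof (cases "u g = 0")
        case True then have "u' g = 0" using u'(4) by blast
        then show ?thesis using False by (simp add: skterm_def)
      next
        case F2: False
        then have "g \<in> ?S" using False by (simp add: skSupp_def)
        then have "u' g = 0" using u'(3) by blast
        then show ?thesis using False by (simp add: skterm_def)
      qed
    qed
  qed
  then show ?thesis using u' by (auto simp: Gp_def)
qed

lemma Gp_mul:
  assumes US: "sphAlg l p n hbar c cm \<subseteq> Skew l p n"
    and x: "x \<in> Gp l p n hbar c cm" and y: "y \<in> Gp l p n hbar c cm"
  shows "gmul x y \<in> Gp l p n hbar c cm"
proof -
  obtain a b where ab: "a \<noteq> 0" "skterm a x \<in> sphAlg l p n hbar c cm" "b \<noteq> 0" "skterm b y \<in> sphAlg l p n hbar c cm"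
    using x y by (auto simp: Gp_def)
  have "x \<in> Grp l p n" using US ab by (auto simp: Skew_iff)
  then have nz: "a * gact hbar x b \<noteq> 0" using ab by (simp add: gact_nz Grp_bij)
  have "skmul hbar (skterm a x) (skterm b y) \<in> sphAlg l p n hbar c cm"
    using ab unfolding sphAlg_def by (blast intro: subalg.mul)
  then have "skterm (a * gact hbar x b) (gmul x y) \<in> sphAlg l p n hbar c cm"
    using ab by (simp add: skmul_skterm)
  then show ?thesis using nz unfolding Gp_def by blast
qed

lemma Gp_gid: "gid \<in> Gp l p n hbar c cm"
proof -
  have "skscal (emb (mconst 1)) \<in> sphAlg l p n hbar c cm"
    unfolding sphAlg_def by (rule subalg.const)
  then show ?thesis by (auto simp: Gp_def skscal_def intro!: exI[of _ 1])
qed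

lemma Gp_Grp:
  assumes US: "sphAlg l p n hbar c cm \<subseteq> Skew l p n"
  shows "Gp l p n hbar c cm \<subseteq> Grp l p n"
  using US by (auto simp: Gp_def Skew_iff)


section \<open>Generation of the group\<close>

lemma cyc_inv1: "0 < n \<Longrightarrow> cycw n 1 \<circ> cycw n (n - 1) = id"
proof (rule ext)
  fix k assume n: "0 < n"
  show "(cycw n 1 \<circ> cycw n (n - 1)) k = id k"
  proof (cases "k < n")
    case True
    have "((k + (n - 1)) mod n + 1) mod n = (k + (n - 1) + 1) mod n" by (rule mod_add_left_eq)
    also have "k + (n - 1) + 1 = k + n" using n by simp
    finally have "((k + (n - 1)) mod n + 1) mod n = k" using True by simp
    then show ?thesis using True n by (simp add: cycw_def)
  next
    case False then show ?thesis by (simp add: cycw_def)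
  qed
qed

lemma cyc_inv2: "0 < n \<Longrightarrow> cycw n (n - 1) \<circ> cycw n 1 = id"
proof (rule ext)
  fix k assume n: "0 < n"
  show "(cycw n (n - 1) \<circ> cycw n 1) k = id k"
  proof (cases "k < n")
    case True
    have "((k + 1) mod n + (n - 1)) mod n = (k + 1 + (n - 1)) mod n" by (rule mod_add_left_eq)
    also have "k + 1 + (n - 1) = k + n" using n by simp
    finally have "((k + 1) mod n + (n - 1)) mod n = k" using True by simp
    then show ?thesis using True n by (simp add: cycw_def)
  next
    case False then show ?thesis by (simp add: cycw_def)
  qed
qed

lemma sum_delta_int: "(\<Sum>k<(n::nat). a k * (if m = k then (x::int) else 0)) = (if m < n then a m * x else 0)"
proof -
  have "(\<Sum>k<n. a k * (if m = k then (x::int) else 0)) = (\<Sum>k<n. if k = m then a k * x else 0)"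
    by (rule sum.cong) auto
  also have "\<dots> = (if m < n then a m * x else 0)" by (subst sum.delta) auto
  finally show ?thesis .
qed

lemma generation:
  fixes G :: "grp set"
  assumes n: "0 < n"
    and mul: "\<And>x y. x \<in> G \<Longrightarrow> y \<in> G \<Longrightarrow> gmul x y \<in> G"
    and gidG: "gid \<in> G"
    and sw: "\<And>i. Suc i < n \<Longrightarrow> ((\<lambda>_. 0), swapw i) \<in> G"
    and X: "((\<lambda>k. if k = 0 then int l else 0), cycw n 1) \<in> G"
    and Y: "((\<lambda>k. if k = n - 1 then - int l else 0), cycw n (n - 1)) \<in> G"
    and Z: "((\<lambda>k. if k < n then int (l div p) else 0), id) \<in> G"
    and Z': "((\<lambda>k. if k < n then - int (l div p) else 0), id) \<in> G"
  shows "Grp l p n \<subseteq> G"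
proof -
  have zz: "gmul ((\<lambda>_. 0), s) ((\<lambda>_. 0), s') = ((\<lambda>_. 0), s \<circ> s')" for s s'
    by (simp add: gmul_simp)
  have gid': "((\<lambda>_. 0), id) \<in> G" using gidG by (simp add: gid_def)
  have tr: "((\<lambda>_. 0), transpose a (Suc (a + d))) \<in> G" if "Suc (a + d) < n" for a d
    using that
  proof (induction d arbitrary: a)
    case 0 then show ?case using sw[of a] by (simp add: swapw_transpose)
  next
    case (Suc d)
    have e: "transpose a (Suc (a + Suc d)) = (swapw a \<circ> transpose (Suc a) (Suc (Suc a + d))) \<circ> swapw a"
      by (auto simp: fun_eq_iff transpose_def swapw_def)
    have "((\<lambda>_. 0), transpose (Suc a) (Suc (Suc a + d))) \<in> G" using Suc.IH[of "Suc a"] Suc.prems by simp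
    moreover have "((\<lambda>_. 0), swapw a) \<in> G" using Suc by (intro sw) simp
    ultimately have "gmul (gmul ((\<lambda>_. 0), swapw a) ((\<lambda>_. 0), transpose (Suc a) (Suc (Suc a + d)))) ((\<lambda>_. 0), swapw a) \<in> G"
      by (intro mul)
    then show ?case unfolding e by (simp only: zz)
  qed
  have tr2: "((\<lambda>_. 0), transpose a b) \<in> G" if "a < n" "b < n" "a \<noteq> b" for a b
  proof (cases "a < b")
    case True
    then obtain d where "b = Suc (a + d)" using less_iff_Suc_add by auto
    then show ?thesis using tr[of a d] that by simp
  next
    case False
    then have "b < a" using that by simp
    then obtain d where "a = Suc (b + d)" using less_iff_Suc_add by auto
    then show ?thesis using tr[of b d] that by (simp add: transpose_commute)
  qed
  have perm: "((\<lambda>_. 0), s) \<in> G" if "s permutes {..<n}" for s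
    using that finite_lessThan
  proof (induction rule: permutes_induct)
    case id then show ?case by (rule gid')
  next
    case (swap a b p)
    then have "gmul ((\<lambda>_. 0), transpose a b) ((\<lambda>_. 0), p) \<in> G" by (intro mul tr2) auto
    then show ?case by (simp only: zz)
  qed
  have tadd: "((\<lambda>k. t k + t' k), id) \<in> G" if "(t, id) \<in> G" "(t', id) \<in> G" for t t'
    using mul[OF that] by (simp add: gmul_simp)
  have conj: "((\<lambda>k. t (inv s k)), id) \<in> G" if s: "s permutes {..<n}" and t: "(t, id) \<in> G" for s t
  proof -
    have "gmul (gmul ((\<lambda>_. 0), s) (t, id)) ((\<lambda>_. 0), inv s) \<in> G"
      using s t by (intro mul perm permutes_inv)
    moreover have "s \<circ> inv s = id" using permutes_surj[OF s] by (simp add: surj_iff)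
    ultimately show ?thesis by (simp add: gmul_simp)
  qed
  have EX: "((\<lambda>k. if k = 0 then int l else 0), id) \<in> G"
  proof -
    have "gmul ((\<lambda>k. if k = 0 then int l else 0), cycw n 1) ((\<lambda>_. 0), cycw n (n - 1)) \<in> G"
      using X n by (intro mul perm cycw_permutes)
    then show ?thesis using cyc_inv1[OF n] by (simp add: gmul_simp)
  qed
  have EY: "((\<lambda>k. if k = n - 1 then - int l else 0), id) \<in> G"
  proof -
    have "gmul ((\<lambda>k. if k = n - 1 then - int l else 0), cycw n (n - 1)) ((\<lambda>_. 0), cycw n 1) \<in> G"
      using Y n by (intro mul perm cycw_permutes)
    then show ?thesis using cyc_inv2[OF n] by (simp add: gmul_simp)
  qed
  have Ek: "((\<lambda>m. if m = k then int l else 0), id) \<in> G" if k: "k < n" for k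
  proof -
    have "((\<lambda>m. (\<lambda>k. if k = 0 then int l else 0) (inv (transpose 0 k) m)), id) \<in> G"
      using n k by (intro conj EX permutes_swap_id) auto
    moreover have "(\<lambda>m. (\<lambda>k. if k = 0 then int l else 0) (inv (transpose 0 k) m)) = (\<lambda>m. if m = k then int l else 0)"
      by (auto simp: fun_eq_iff transpose_def)
    ultimately show ?thesis by simp
  qed
  have NEk: "((\<lambda>m. - (if m = k then int l else 0)), id) \<in> G" if k: "k < n" for k
  proof -
    have "((\<lambda>m. (\<lambda>k. if k = n - 1 then - int l else 0) (inv (transpose (n - 1) k) m)), id) \<in> G"
      using n k by (intro conj EY permutes_swap_id) auto
    moreover have "(\<lambda>m. (\<lambda>k. if k = n - 1 then - int l else 0) (inv (transpose (n - 1) k) m)) = (\<lambda>m. - (if m = k then int l else 0))"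
      by (auto simp: fun_eq_iff transpose_def)
    ultimately show ?thesis by simp
  qed
  have mults: "((\<lambda>m. z * v m), id) \<in> G" if v: "(v, id) \<in> G" and nv: "((\<lambda>m. - v m), id) \<in> G" for v and z :: int
  proof -
    have nat: "((\<lambda>m. int N * v m), id) \<in> G \<and> ((\<lambda>m. - int N * v m), id) \<in> G" for N
    proof (induction N)
      case 0 then show ?case using gid' by (simp add: id_def)
    next
      case (Suc N)
      then have "((\<lambda>m. v m + int N * v m), id) \<in> G" "((\<lambda>m. - v m + - int N * v m), id) \<in> G"
        using tadd v nv by blast+
      then show ?case by (simp add: algebra_simps id_def)
    qed
    show ?thesis
    proof (cases "0 \<le> z")
      case True
      then have "z = int (nat z)" by simp
      then show ?thesis using nat[of "nat z"] by metis
    next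
      case False
      then have "z = - int (nat (- z))" by simp
      then show ?thesis using nat[of "nat (- z)"] by metis
    qed
  qed
  have sumk: "((\<lambda>m. \<Sum>k<N. a k * (if m = k then int l else 0)), id) \<in> G" if "N \<le> n" for N a
    using that
  proof (induction N)
    case 0 then show ?case using gid' by (simp add: id_def)
  next
    case (Suc N)
    have "((\<lambda>m. a N * (if m = N then int l else 0)), id) \<in> G"
      using Suc.prems by (intro mults Ek NEk) auto
    moreover have "((\<lambda>m. \<Sum>k<N. a k * (if m = k then int l else 0)), id) \<in> G"
      using Suc.IH Suc.prems by (simp add: id_def)
    ultimately have "((\<lambda>m. (\<Sum>k<N. a k * (if m = k then int l else 0)) + a N * (if m = N then int l else 0)), id) \<in> G"
      using tadd by simp
    then show ?case by (simp add: id_def)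
  qed
  have nZ: "((\<lambda>m. - (if m < n then int (l div p) else 0)), id) \<in> G"
  proof -
    have "(\<lambda>m. - (if m < n then int (l div p) else 0)) = (\<lambda>k. if k < n then - int (l div p) else 0)"
      by (auto simp: fun_eq_iff)
    then show ?thesis using Z' by simp
  qed
  show ?thesis
  proof
    fix g assume g: "g \<in> Grp l p n"
    then obtain t w where tw: "g = (t, w)" "t \<in> Tlat l p n" "w permutes {..<n}" by (auto simp: Grp_def)
    then obtain a b where ab: "\<forall>j\<ge>n. t j = 0" "\<forall>j<n. t j = a j * int l + b * int (l div p)"
      by (auto simp: Tlat_def)
    have "((\<lambda>m. (\<Sum>k<n. a k * (if m = k then int l else 0)) + b * (if m < n then int (l div p) else 0)), id) \<in> G"
      by (intro tadd sumk mults Z nZ) simp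
    moreover have "(\<lambda>m. (\<Sum>k<n. a k * (if m = k then int l else 0)) + b * (if m < n then int (l div p) else 0)) = t"
      using ab by (auto simp: fun_eq_iff sum_delta_int)
    ultimately have "(t, id) \<in> G" by simp
    then have "gmul (t, id) ((\<lambda>_. 0), w) \<in> G" using tw by (intro mul perm)
    then show "g \<in> G" using tw by (simp add: gmul_simp)
  qed
qed


lemma span_decomp:
  assumes z: "sk0 \<in> R" and a: "\<And>x y. x \<in> R \<Longrightarrow> y \<in> R \<Longrightarrow> skadd x y \<in> R"
    and fin: "finite S" and t: "\<And>g. g \<in> S \<Longrightarrow> skterm (F g) g \<in> R"
  shows "(\<lambda>x. if x \<in> S then F x else 0) \<in> R"
  using fin t
proof (induction S rule: finite_induct)
  case empty
  have "(\<lambda>x. if x \<in> {} then F x else 0) = sk0" by (simp add: sk0_def fun_eq_iff)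
  then show ?case using z by simp
next
  case (insert g S)
  have "(\<lambda>x. if x \<in> insert g S then F x else 0) = skadd (skterm (F g) g) (\<lambda>x. if x \<in> S then F x else 0)"
    using insert.hyps by (auto simp: fun_eq_iff skadd_def skterm_def)
  moreover have "skadd (skterm (F g) g) (\<lambda>x. if x \<in> S then F x else 0) \<in> R"
    using insert by (intro a) auto
  ultimately show ?case by simp
qed

lemma Skew_decomp:
  assumes z: "sk0 \<in> R" and a: "\<And>x y. x \<in> R \<Longrightarrow> y \<in> R \<Longrightarrow> skadd x y \<in> R"
    and t: "\<And>g b. g \<in> Grp l p n \<Longrightarrow> b \<in> Kfield n \<Longrightarrow> skterm b g \<in> R"
    and F: "F \<in> Skew l p n"
  shows "F \<in> R"
proof -
  have "(\<lambda>x. if x \<in> skSupp F then F x else 0) \<in> R"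
    using F by (intro span_decomp[OF z a]) (auto simp: Skew_iff intro!: t)
  moreover have "(\<lambda>x. if x \<in> skSupp F then F x else 0) = F" by (auto simp: fun_eq_iff skSupp_def)
  ultimately show ?thesis by simp
qed

lemma prod_lin_nz: "finite I \<Longrightarrow> (\<Prod>i\<in>I. mvar (f i) + mconst (z i)) \<noteq> 0"
  by (simp add: prod_zero_iff lin_nz)

lemma swap_coeff_nz:
  fixes C :: complex
  shows "1 + emb (mconst C) / emb (mvar (Suc i) - mvar i) \<noteq> 0"
proof
  let ?V = "mvar (Suc i) - mvar i"
  have lk: "Poly_Mapping.lookup ?V (Poly_Mapping.single (Suc i) 1) = 1"
    by (simp only: lookup_minus lookup_mvar single_one_eq_iff) simp
  then have V: "?V \<noteq> 0" by auto
  then have eV: "emb ?V \<noteq> 0" by (rule emb_nz)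
  assume "1 + emb (mconst C) / emb ?V = 0"
  then have "emb ?V + emb (mconst C) = 0" using eV by (simp add: field_simps)
  then have "emb (?V + mconst C) = emb 0" by (simp add: emb_add)
  then have "?V + mconst C = 0" by (simp only: emb_eq_iff)
  then have "Poly_Mapping.lookup (?V + mconst C) (Poly_Mapping.single (Suc i) 1) = 0" by simp
  moreover have "Poly_Mapping.lookup (mconst C) (Poly_Mapping.single (Suc i) 1) = 0"
    by (simp only: lookup_mconst single_one_nz' if_False)
  ultimately show False using lk by (simp add: lookup_add)
qed

lemma swapw_ne_id: "swapw i \<noteq> id"
proof
  assume "swapw i = id"
  then have "swapw i i = i" by simp
  then show False by (simp add: swapw_def)
qed

theorem proposition3p13:
  fixes l p n :: nat and hbar c :: complex and cm :: "nat \<Rightarrow> complex"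
  assumes "0 < l" and "0 < p" and "0 < n" and "p dvd l"
    and "hbar \<noteq> 0"
    and "\<And>m. \<not> p dvd m \<Longrightarrow> cm m = 0"
  shows "galois_ring l p n hbar (sphAlg l p n hbar c cm)"
proof -
  let ?U = "sphAlg l p n hbar c cm"
  have n: "0 < n" and h: "hbar \<noteq> 0" using assms by auto
  have US: "?U \<subseteq> Skew l p n"
    unfolding sphAlg_def by (rule subalg_Skew[OF gens_Skew]) (use assms in auto)
  have GamU: "skscal ` emb ` Gam n \<subseteq> ?U"
    using Gam_in_U by blast
  have genU: "x \<in> gens l p n hbar c cm \<Longrightarrow> x \<in> ?U" for x
    unfolding sphAlg_def by (rule subalg.gen)
  have Gp_of_term: "g \<in> Gp l p n hbar c cm" if "skterm a g \<in> gens l p n hbar c cm" "a \<noteq> 0" for a g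
    using that genU unfolding Gp_def by blast
  have GrpGp: "Grp l p n \<subseteq> Gp l p n hbar c cm"
  proof (rule generation[OF n])
    show "gmul x y \<in> Gp l p n hbar c cm" if "x \<in> Gp l p n hbar c cm" "y \<in> Gp l p n hbar c cm" for x y
      using Gp_mul[OF US that] .
    show "gid \<in> Gp l p n hbar c cm" by (rule Gp_gid)
  next
    fix i assume i: "Suc i < n"
    let ?A = "1 + emb (mconst (c * of_nat l)) / emb (mvar (Suc i) - mvar i)"
    let ?B = "- (emb (mconst (c * of_nat l)) / emb (mvar (Suc i) - mvar i))"
    let ?u = "skadd (skterm ?A ((\<lambda>_. 0), swapw i)) (skscal ?B)"
    have "?u \<in> gens l p n hbar c cm" using i unfolding gens_def by blast
    then have u: "?u \<in> ?U" by (rule genU)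
    have ne: "((\<lambda>_. 0::int), swapw i) \<noteq> gid" using swapw_ne_id by (simp add: gid_def)
    have "?u ((\<lambda>_. 0), swapw i) = ?A" using ne by (simp add: skadd_def skscal_def skterm_def)
    then have "?u ((\<lambda>_. 0), swapw i) \<noteq> 0" using swap_coeff_nz by simp
    then show "((\<lambda>_. 0), swapw i) \<in> Gp l p n hbar c cm" by (rule supp_Gp[OF US h u])
  next
    show "((\<lambda>k. if k = 0 then int l else 0), cycw n 1) \<in> Gp l p n hbar c cm"
      by (rule Gp_of_term[where a="emb (\<Prod>m<l. mvar 0 + mconst (of_nat l * hbar - spar l cm hbar m))"])
         (auto simp: gens_def intro!: emb_nz prod_lin_nz)
    show "((\<lambda>k. if k = n - 1 then - int l else 0), cycw n (n - 1)) \<in> Gp l p n hbar c cm"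
      by (rule Gp_of_term[where a=1]) (auto simp: gens_def)
    show "((\<lambda>k. if k < n then int (l div p) else 0), id) \<in> Gp l p n hbar c cm"
      by (rule Gp_of_term[where a="emb (\<Prod>i<n. \<Prod>m<l div p. mvar i + mconst (of_nat (l div p) * hbar - spar l cm hbar m))"])
         (auto simp: gens_def prod_zero_iff lin_nz intro!: emb_nz)
    show "((\<lambda>k. if k < n then - int (l div p) else 0), id) \<in> Gp l p n hbar c cm"
      by (rule Gp_of_term[where a=1]) (auto simp: gens_def)
  qed
  have term_data: "\<exists>cc. cc \<noteq> 0 \<and> cc \<in> Kfield n \<and> skterm cc g \<in> ?U" if g: "g \<in> Grp l p n" for g
  proof -
    obtain cc where cc: "cc \<noteq> 0" "skterm cc g \<in> ?U" using GrpGp g unfolding Gp_def by blast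
    then have "skterm cc g \<in> Skew l p n" using US by blast
    then have "skterm cc g g \<in> Kfield n" by (simp only: Skew_iff)
    then show ?thesis using cc by (auto simp: skterm_def)
  qed
  have R1: "rspan hbar ?U (Kfield n) = Skew l p n"
  proof
    show "rspan hbar ?U (Kfield n) \<subseteq> Skew l p n"
    proof
      fix x assume "x \<in> rspan hbar ?U (Kfield n)"
      then show "x \<in> Skew l p n"
      proof induction
        case zero then show ?case by simp
      next
        case (trm u a) then show ?case
          using US unfolding skscal_def by (blast intro: skmul_Skew skterm_Skew gid_Grp)
      next
        case (add x y) then show ?case by (blast intro: skadd_Skew)
      qed
    qed
  next
    show "Skew l p n \<subseteq> rspan hbar ?U (Kfield n)"
    proof
      fix F assume F: "F \<in> Skew l p n"
      show "F \<in> rspan hbar ?U (Kfield n)"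
      proof (rule Skew_decomp[OF rspan.zero _ _ F])
        show "skadd x y \<in> rspan hbar ?U (Kfield n)" if "x \<in> rspan hbar ?U (Kfield n)" "y \<in> rspan hbar ?U (Kfield n)" for x y
          using that by (rule rspan.add)
      next
        fix g b assume g: "g \<in> Grp l p n" and b: "b \<in> Kfield n"
        show "skterm b g \<in> rspan hbar ?U (Kfield n)"
        proof (cases "b = 0")
          case True then show ?thesis by (simp add: rspan.zero)
        next
          case False
          obtain cc where cc: "cc \<noteq> 0" "cc \<in> Kfield n" "skterm cc g \<in> ?U" using term_data[OF g] by blast
          have bg: "bij (snd g)" by (rule Grp_bij[OF g])
          let ?a = "gact hbar (ginv g) (b / cc)"
          have aK: "?a \<in> Kfield n"
          proof (rule gact_K)
            show "bij (snd (ginv g))" by (rule bij_ginv[OF bg])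
            show "b / cc \<in> Kfield n" using b cc by (simp add: K_divide)
            fix j assume j: "j < n"
            obtain t w where tw: "g = (t, w)" "w permutes {..<n}" using g by (auto simp: Grp_def)
            have "inv w permutes {..<n}" using tw by (simp add: permutes_inv)
            then show "snd (ginv g) j < n" using tw j permutes_in_image[of "inv w" "{..<n}" j]
              by (simp add: ginv_def)
          qed
          have ga: "gact hbar g ?a = b / cc" by (rule gact_inv[OF bg])
          have anz: "?a \<noteq> 0"
          proof
            assume "?a = 0"
            then have "gact hbar g ?a = 0" using bg by simp
            then show False using ga False cc by simp
          qed
          have "skmul hbar (skterm cc g) (skscal ?a) = skterm b g"
            using anz cc ga by (simp add: skmul_scal_right fun_eq_iff skterm_def)
          moreover have "skmul hbar (skterm cc g) (skscal ?a) \<in> rspan hbar ?U (Kfield n)"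
            using cc aK by (intro rspan.trm)
          ultimately show ?thesis by simp
        qed
      qed
    qed
  qed
  have R2: "lspan hbar (Kfield n) ?U = Skew l p n"
  proof
    show "lspan hbar (Kfield n) ?U \<subseteq> Skew l p n"
    proof
      fix x assume "x \<in> lspan hbar (Kfield n) ?U"
      then show "x \<in> Skew l p n"
      proof induction
        case zero then show ?case by simp
      next
        case (trm u a) then show ?case
          using US unfolding skscal_def by (blast intro: skmul_Skew skterm_Skew gid_Grp)
      next
        case (add x y) then show ?case by (blast intro: skadd_Skew)
      qed
    qed
  next
    show "Skew l p n \<subseteq> lspan hbar (Kfield n) ?U"
    proof
      fix F assume F: "F \<in> Skew l p n"
      show "F \<in> lspan hbar (Kfield n) ?U"
      proof (rule Skew_decomp[OF lspan.zero _ _ F])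
        show "skadd x y \<in> lspan hbar (Kfield n) ?U" if "x \<in> lspan hbar (Kfield n) ?U" "y \<in> lspan hbar (Kfield n) ?U" for x y
          using that by (rule lspan.add)
      next
        fix g b assume g: "g \<in> Grp l p n" and b: "b \<in> Kfield n"
        obtain cc where cc: "cc \<noteq> 0" "cc \<in> Kfield n" "skterm cc g \<in> ?U" using term_data[OF g] by blast
        have "skmul hbar (skscal (b / cc)) (skterm cc g) = skterm b g"
          using cc by (simp add: skmul_scal_left fun_eq_iff skterm_def)
        moreover have "skmul hbar (skscal (b / cc)) (skterm cc g) \<in> lspan hbar (Kfield n) ?U"
          using cc b by (intro lspan.trm K_divide)
        ultimately show "skterm b g \<in> lspan hbar (Kfield n) ?U" by simp
      qed
    qed
  qed
  show ?thesis unfolding galois_ring_def using US GamU R1 R2 by blast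
qed

end
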